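(* Let $1\le d<n$ and $r\ge1$ be integers such that $$\left(1+d(n-d)+\binom{d}{2}\binom{n-d}{2}\right)r\le\binom{n}{d}.$$ Then the secant variety $\sigma_r(\mathcal{M}_{n,(1^d)})$ of the hypersimplex variety has the expected dimension $\min\{nr-1,\binom{n}{d}-1\}$, which here equals $nr-1$.
   Context: Work over $\mathbb{C}$. The variety $\mathcal{M}_{n,(1^d)}\subset\mathbb{P}^{\binom{n}{d}-1}$ is the toric variety of the hypersimplex $\Delta(n,d)=\mathrm{conv}\{e_{l_1}+\cdots+e_{l_d}:1\le l_1<\cdots<l_d\le n\}$. Concretely, it has coordinates $m_{i_1\cdots i_n}$ for $0/1$ vectors with exactly $d$ ones, and it is the Zariski closure of the image of $(\mu_{11},\ldots,\mu_{n1})\mapsto\bigl(\prod_{k:i_k=1}\mu_{k1}\bigr)$. It has dimension $n-1$. Its $r$-th secant variety $\sigma_r(\mathcal{M}_{n,(1^d)})$ is the Zariski closure of the image of $m_{i_1\cdots i_n}=\sum_{j=1}^r\prod_{k:i_k=1}\mu^{(j)}_{k1}$. Its expected dimension is $\min\{r(n-1)+r-1,\binom nd-1\}$. *)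

theory Defs
  imports Complex_Main "HOL-Library.Poly_Mapping"
begin

type_synonym 'v cpoly = "('v \<Rightarrow>\<^sub>0 nat) \<Rightarrow>\<^sub>0 complex"

definition poly_eval :: "'v cpoly \<Rightarrow> ('v \<Rightarrow> complex) \<Rightarrow> complex" where
  "poly_eval p x = (\<Sum>\<alpha>\<in>Poly_Mapping.keys p. Poly_Mapping.lookup p \<alpha> * (\<Prod>v\<in>Poly_Mapping.keys \<alpha>. (x v) ^ (Poly_Mapping.lookup \<alpha> v)))"

definition poly_vars :: "'v cpoly \<Rightarrow> 'v set" where
  "poly_vars p = (\<Union>m\<in>Poly_Mapping.keys p. Poly_Mapping.keys m)"

definition alg_indep_on :: "('v \<Rightarrow> complex) set \<Rightarrow> 'v set \<Rightarrow> bool" where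
  "alg_indep_on V S \<longleftrightarrow>
     (\<forall>p. poly_vars p \<subseteq> S \<longrightarrow> (\<forall>x\<in>V. poly_eval p x = 0) \<longrightarrow> p = 0)"

text \<open>Dimension of the Zariski closure of V inside the affine space with coordinates C:
  the transcendence degree of its coordinate ring, i.e. the maximal number of
  coordinates that are algebraically independent on V.\<close>
definition affine_dim :: "'v set \<Rightarrow> ('v \<Rightarrow> complex) set \<Rightarrow> nat" where
  "affine_dim C V = Max {card S | S. S \<subseteq> C \<and> alg_indep_on V S}"

text \<open>Coordinates of P^(binom n d - 1): the d-subsets of {0..<n}
  (identified with 0/1 vectors with exactly d ones).\<close>
definition hyp_coords :: "nat \<Rightarrow> nat \<Rightarrow> nat set set" where
  "hyp_coords n d = {S. S \<subseteq> {..<n} \<and> card S = d}"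

text \<open>Image of the parametrization of the r-th secant variety (affine cone):
  m_S = sum_{j<r} prod_{k in S} mu^(j)_k.\<close>
definition secant_param_image :: "nat \<Rightarrow> nat \<Rightarrow> nat \<Rightarrow> (nat set \<Rightarrow> complex) set" where
  "secant_param_image n d r =
     {x. \<exists>\<mu> :: nat \<Rightarrow> nat \<Rightarrow> complex.
          x = (\<lambda>S. if S \<in> hyp_coords n d then (\<Sum>j<r. \<Prod>k\<in>S. \<mu> j k) else 0)}"

text \<open>Projective dimension of sigma_r(M_{n,(1^d)}) = dimension of its affine cone minus 1.\<close>
definition secant_dim :: "nat \<Rightarrow> nat \<Rightarrow> nat \<Rightarrow> nat" where
  "secant_dim n d r = affine_dim (hyp_coords n d) (secant_param_image n d r) - 1"

end

theory Submission
  imports Defs "HOL-Library.FuncSet" "HOL-Computational_Algebra.Polynomial"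
begin


lemma lin_sys:
  fixes a :: "'e \<Rightarrow> 'x \<Rightarrow> complex"
  assumes "finite Eq" "finite X" "card Eq < card X"
  shows "\<exists>c. (\<exists>i\<in>X. c i \<noteq> 0) \<and> (\<forall>e\<in>Eq. (\<Sum>i\<in>X. a e i * c i) = 0)"
  using assms
proof (induction Eq arbitrary: X a rule: finite_induct)
  case empty
  then obtain i where "i \<in> X" by fastforce
  then show ?case by (intro exI[of _ "\<lambda>_. 1"]) auto
next
  case (insert e Eq)
  show ?case
  proof (cases "\<forall>i\<in>X. a e i = 0")
    case True
    have "card Eq < card X" using insert by simp
    from insert.IH[OF insert.prems(1) this, of a] obtain c where
      c: "(\<exists>i\<in>X. c i \<noteq> 0)" "(\<forall>e\<in>Eq. (\<Sum>i\<in>X. a e i * c i) = 0)" by blast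
    show ?thesis using c True by (intro exI[of _ c]) auto
  next
    case False
    then obtain i0 where i0: "i0 \<in> X" "a e i0 \<noteq> 0" by blast
    define X' where "X' = X - {i0}"
    define a' where "a' = (\<lambda>e' i. a e' i - a e' i0 * a e i / a e i0)"
    have fX': "finite X'" using insert X'_def by auto
    have "card Eq < card X'" using insert i0 X'_def by (simp add: card_Diff_singleton)
    from insert.IH[OF fX' this, of a'] obtain c' where
      c': "(\<exists>i\<in>X'. c' i \<noteq> 0)" "(\<forall>e\<in>Eq. (\<Sum>i\<in>X'. a' e i * c' i) = 0)" by blast
    define c where "c = (\<lambda>i. if i = i0 then - (\<Sum>i\<in>X'. a e i * c' i) / a e i0 else c' i)"
    have split: "(\<Sum>i\<in>X. g i) = g i0 + (\<Sum>i\<in>X'. g i)" for g :: "'x \<Rightarrow> complex"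
      using i0 insert.prems(1) X'_def by (simp add: sum.remove)
    have cX': "(\<Sum>i\<in>X'. f i * c i) = (\<Sum>i\<in>X'. f i * c' i)" for f
      by (rule sum.cong) (auto simp: c_def X'_def)
    have "(\<Sum>i\<in>X. a e' i * c i) = 0" if "e' \<in> insert e Eq" for e'
    proof (cases "e' = e")
      case True
      then show ?thesis using i0 by (simp add: split cX') (simp add: c_def)
    next
      case False
      then have e': "e' \<in> Eq" using that by simp
      have "(\<Sum>i\<in>X'. a' e' i * c' i) = (\<Sum>i\<in>X'. a e' i * c' i) - a e' i0 / a e i0 * (\<Sum>i\<in>X'. a e i * c' i)"
        by (simp add: a'_def algebra_simps sum_subtractf sum_distrib_left)
      then have "(\<Sum>i\<in>X'. a e' i * c' i) - a e' i0 / a e i0 * (\<Sum>i\<in>X'. a e i * c' i) = 0"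
        using c'(2) e' by simp
      then show ?thesis by (simp add: split cX') (simp add: c_def algebra_simps)
    qed
    moreover have "\<exists>i\<in>X. c i \<noteq> 0" using c' by (auto simp: c_def X'_def)
    ultimately show ?thesis by blast
  qed
qed



definition pmono :: "'p set \<Rightarrow> ('p \<Rightarrow> nat) \<Rightarrow> ('p \<Rightarrow> complex) \<Rightarrow> complex" where
  "pmono P \<beta> \<mu> = (\<Prod>q\<in>P. \<mu> q ^ \<beta> q)"
definition pmon :: "'p set \<Rightarrow> nat \<Rightarrow> ('p \<Rightarrow> nat) set" where
  "pmon P K = {\<beta>. (\<forall>q. q \<notin> P \<longrightarrow> \<beta> q = 0) \<and> (\<forall>q\<in>P. \<beta> q \<le> K)}"
definition ppol :: "'p set \<Rightarrow> nat \<Rightarrow> (('p \<Rightarrow> complex) \<Rightarrow> complex) set" where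
  "ppol P K = {f. \<exists>c. \<forall>\<mu>. f \<mu> = (\<Sum>\<beta>\<in>pmon P K. c \<beta> * pmono P \<beta> \<mu>)}"

lemma pmon_bij:
  "bij_betw (\<lambda>\<beta>. restrict \<beta> P) (pmon P K) (PiE P (\<lambda>_. {..K}))"
proof (rule bij_betw_byWitness[where f' = "\<lambda>f q. if q \<in> P then f q else 0"])
  show "\<forall>a\<in>pmon P K. (\<lambda>q. if q \<in> P then restrict a P q else 0) = a"
    by (auto simp: pmon_def fun_eq_iff)
  show "\<forall>a'\<in>PiE P (\<lambda>_. {..K}). restrict (\<lambda>q. if q \<in> P then a' q else 0) P = a'"
    by (auto simp: fun_eq_iff PiE_def extensional_def)
  show "(\<lambda>\<beta>. restrict \<beta> P) ` pmon P K \<subseteq> PiE P (\<lambda>_. {..K})"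
    by (auto simp: pmon_def)
  show "(\<lambda>f q. if q \<in> P then f q else 0) ` PiE P (\<lambda>_. {..K}) \<subseteq> pmon P K"
    by (auto simp: pmon_def PiE_def Pi_def)
qed

lemma finite_pmon: "finite P \<Longrightarrow> finite (pmon P K)"
  using bij_betw_finite[OF pmon_bij, of P K] finite_PiE[of P "\<lambda>_. {..K}"] by simp

lemma card_pmon: "finite P \<Longrightarrow> card (pmon P K) = (K+1) ^ card P"
  using bij_betw_same_card[OF pmon_bij, of P K] by (simp add: card_PiE)

lemma pmon_mono: "K \<le> K' \<Longrightarrow> pmon P K \<subseteq> pmon P K'"
  by (auto simp: pmon_def)

lemma ppol_mono:
  assumes "finite P" "K \<le> K'" "f \<in> ppol P K" shows "f \<in> ppol P K'"
proof -
  obtain c where c: "\<And>\<mu>. f \<mu> = (\<Sum>\<beta>\<in>pmon P K. c \<beta> * pmono P \<beta> \<mu>)" using assms by (auto simp: ppol_def)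
  define c' where "c' = (\<lambda>\<beta>. if \<beta> \<in> pmon P K then c \<beta> else 0)"
  have "f \<mu> = (\<Sum>\<beta>\<in>pmon P K'. c' \<beta> * pmono P \<beta> \<mu>)" for \<mu>
    unfolding c
    by (rule sum.mono_neutral_cong_left) (use assms pmon_mono[OF assms(2)] finite_pmon in \<open>auto simp: c'_def\<close>)
  then show ?thesis by (auto simp: ppol_def)
qed

lemma ppol_add:
  assumes "f \<in> ppol P K" "g \<in> ppol P K" shows "(\<lambda>\<mu>. f \<mu> + g \<mu>) \<in> ppol P K"
proof -
  obtain c where c: "\<And>\<mu>. f \<mu> = (\<Sum>\<beta>\<in>pmon P K. c \<beta> * pmono P \<beta> \<mu>)" using assms by (auto simp: ppol_def)
  obtain c' where c': "\<And>\<mu>. g \<mu> = (\<Sum>\<beta>\<in>pmon P K. c' \<beta> * pmono P \<beta> \<mu>)" using assms by (auto simp: ppol_def)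
  have "f \<mu> + g \<mu> = (\<Sum>\<beta>\<in>pmon P K. (c \<beta> + c' \<beta>) * pmono P \<beta> \<mu>)" for \<mu>
    by (simp add: c c' sum.distrib algebra_simps)
  then show ?thesis by (auto simp: ppol_def)
qed

lemma ppol_zero: "(\<lambda>\<mu>. 0) \<in> ppol P K"
  by (auto simp: ppol_def intro!: exI[of _ "\<lambda>_. 0"])

lemma ppol_sum:
  assumes "\<And>i. i \<in> I \<Longrightarrow> f i \<in> ppol P K" shows "(\<lambda>\<mu>. \<Sum>i\<in>I. f i \<mu>) \<in> ppol P K"
  using assms
proof (induction I rule: infinite_finite_induct)
  case (infinite A) then show ?case by (simp add: ppol_zero)
next
  case empty then show ?case by (simp add: ppol_zero)
next
  case (insert x F)
  then show ?case by (simp add: ppol_add)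
qed

lemma pmono_in_ppol:
  assumes "finite P" "\<beta> \<in> pmon P K" shows "pmono P \<beta> \<in> ppol P K"
proof -
  have "pmono P \<beta> \<mu> = (\<Sum>\<beta>'\<in>pmon P K. (if \<beta>' = \<beta> then 1 else 0) * pmono P \<beta>' \<mu>)" for \<mu>
  proof -
    have "(\<Sum>\<beta>'\<in>pmon P K. (if \<beta>' = \<beta> then 1 else 0) * pmono P \<beta>' \<mu>) = (\<Sum>\<beta>'\<in>pmon P K. if \<beta>' = \<beta> then pmono P \<beta>' \<mu> else 0)"
      by (rule sum.cong) auto
    then show ?thesis using assms finite_pmon[OF assms(1)] by simp
  qed
  then show ?thesis unfolding ppol_def by (intro CollectI exI[of _ "\<lambda>\<beta>'. if \<beta>' = \<beta> then 1 else 0"]) blast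
qed

lemma pmono_add: "pmono P (\<lambda>q. \<beta>1 q + \<beta>2 q) \<mu> = pmono P \<beta>1 \<mu> * pmono P \<beta>2 \<mu>"
  by (simp add: pmono_def power_add prod.distrib)

lemma ppol_mult:
  assumes P: "finite P" and "f \<in> ppol P K1" "g \<in> ppol P K2"
  shows "(\<lambda>\<mu>. f \<mu> * g \<mu>) \<in> ppol P (K1 + K2)"
proof -
  obtain c1 where c1: "\<And>\<mu>. f \<mu> = (\<Sum>\<beta>\<in>pmon P K1. c1 \<beta> * pmono P \<beta> \<mu>)" using assms by (auto simp: ppol_def)
  obtain c2 where c2: "\<And>\<mu>. g \<mu> = (\<Sum>\<beta>\<in>pmon P K2. c2 \<beta> * pmono P \<beta> \<mu>)" using assms by (auto simp: ppol_def)
  define M where "M = pmon P K1 \<times> pmon P K2"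
  define pl where "pl = (\<lambda>x::('a \<Rightarrow> nat) \<times> ('a \<Rightarrow> nat). (\<lambda>q. fst x q + snd x q))"
  define c where "c = (\<lambda>\<beta>. \<Sum>x\<in>{x\<in>M. pl x = \<beta>}. c1 (fst x) * c2 (snd x))"
  have fM: "finite M" using P by (simp add: M_def finite_pmon)
  have img: "pl ` M \<subseteq> pmon P (K1 + K2)"
    by (auto simp: M_def pl_def pmon_def add_mono)
  have "f \<mu> * g \<mu> = (\<Sum>\<beta>\<in>pmon P (K1+K2). c \<beta> * pmono P \<beta> \<mu>)" for \<mu>
  proof -
    have "f \<mu> * g \<mu> = (\<Sum>x\<in>M. c1 (fst x) * c2 (snd x) * pmono P (pl x) \<mu>)"
      unfolding c1 c2 sum_product M_def sum.cartesian_product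
      by (rule sum.cong) (auto simp: pl_def pmono_add)
    also have "\<dots> = (\<Sum>\<beta>\<in>pmon P (K1+K2). \<Sum>x\<in>{x\<in>M. pl x = \<beta>}. c1 (fst x) * c2 (snd x) * pmono P (pl x) \<mu>)"
      by (rule sum.group[symmetric, OF fM finite_pmon[OF P] img])
    also have "\<dots> = (\<Sum>\<beta>\<in>pmon P (K1+K2). c \<beta> * pmono P \<beta> \<mu>)"
      unfolding c_def sum_distrib_right by (rule sum.cong, simp, rule sum.cong) auto
    finally show ?thesis .
  qed
  then show ?thesis by (auto simp: ppol_def)
qed

lemma ppol_one: "finite P \<Longrightarrow> (\<lambda>\<mu>. 1) \<in> ppol P K"
proof -
  assume P: "finite P"
  have "(\<lambda>_. 0) \<in> pmon P K" by (simp add: pmon_def)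
  moreover have "pmono P (\<lambda>_. 0) = (\<lambda>\<mu>. 1)" by (simp add: pmono_def fun_eq_iff)
  ultimately show ?thesis using pmono_in_ppol[OF P] by metis
qed

lemma ppol_prod:
  assumes P: "finite P" and "finite I" "\<And>i. i \<in> I \<Longrightarrow> f i \<in> ppol P (K i)"
  shows "(\<lambda>\<mu>. \<Prod>i\<in>I. f i \<mu>) \<in> ppol P (\<Sum>i\<in>I. K i)"
  using assms(2,3)
proof (induction I rule: finite_induct)
  case empty then show ?case using ppol_one[OF P] by simp
next
  case (insert x F)
  then show ?case using ppol_mult[OF P, of "f x" "K x" "\<lambda>\<mu>. \<Prod>i\<in>F. f i \<mu>"] by simp
qed

lemma ppol_power:
  assumes P: "finite P" and "f \<in> ppol P K"
  shows "(\<lambda>\<mu>. f \<mu> ^ a) \<in> ppol P (a * K)"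
  using ppol_prod[OF P, of "{..<a}" "\<lambda>_. f" "\<lambda>_. K"] assms by simp



lemma prod_keys_eq:
  fixes m :: "'v \<Rightarrow>\<^sub>0 nat"
  assumes "finite T" "Poly_Mapping.keys m \<subseteq> T"
  shows "(\<Prod>v\<in>Poly_Mapping.keys m. x v ^ Poly_Mapping.lookup m v) = (\<Prod>v\<in>T. x v ^ Poly_Mapping.lookup m v)"
proof (rule prod.mono_neutral_left)
  show "\<forall>i\<in>T - Poly_Mapping.keys m. x i ^ Poly_Mapping.lookup m i = 1"
  proof
    fix i assume "i \<in> T - Poly_Mapping.keys m"
    then have "Poly_Mapping.lookup m i = 0" by (simp add: in_keys_iff)
    then show "x i ^ Poly_Mapping.lookup m i = 1" by simp
  qed
qed (use assms in auto)

lemma poly_eval_cong: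
  fixes p :: "'v cpoly"
  assumes "poly_vars p \<subseteq> T" "\<And>v. v \<in> T \<Longrightarrow> x v = y v"
  shows "poly_eval p x = poly_eval p y"
  unfolding poly_eval_def
proof (rule sum.cong[OF refl], rule arg_cong[where f = "\<lambda>z. _ * z"], rule prod.cong[OF refl])
  fix \<alpha> :: "'v \<Rightarrow>\<^sub>0 nat" and v :: 'v assume "\<alpha> \<in> Poly_Mapping.keys p" "v \<in> Poly_Mapping.keys \<alpha>"
  then have "v \<in> T" using assms(1) by (auto simp: poly_vars_def)
  then show "x v ^ Poly_Mapping.lookup \<alpha> v = y v ^ Poly_Mapping.lookup \<alpha> v" using assms(2) by simp
qed

lemma poly_from_coeffs:
  fixes A :: "('v \<Rightarrow> nat) set" and c :: "('v \<Rightarrow> nat) \<Rightarrow> complex"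
  assumes fT: "finite T" and fA: "finite A" and A: "\<And>\<alpha> v. \<alpha> \<in> A \<Longrightarrow> v \<notin> T \<Longrightarrow> \<alpha> v = 0"
    and nz: "\<exists>\<alpha>\<in>A. c \<alpha> \<noteq> 0"
  shows "\<exists>p::'v cpoly. p \<noteq> 0 \<and> poly_vars p \<subseteq> T \<and>
     (\<forall>x. poly_eval p x = (\<Sum>\<alpha>\<in>A. c \<alpha> * (\<Prod>v\<in>T. x v ^ \<alpha> v)))"
proof -
  have finsupp: "finite {v. \<alpha> v \<noteq> 0}" if "\<alpha> \<in> A" for \<alpha>
  proof (rule finite_subset[OF _ fT])
    show "{v. \<alpha> v \<noteq> 0} \<subseteq> T"
    proof
      fix v assume "v \<in> {v. \<alpha> v \<noteq> 0}"
      then show "v \<in> T" using A[OF that, of v] by auto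
    qed
  qed
  define f where "f = (\<lambda>m::'v \<Rightarrow>\<^sub>0 nat. if Poly_Mapping.lookup m \<in> A then c (Poly_Mapping.lookup m) else 0)"
  have sub: "{m. f m \<noteq> 0} \<subseteq> Abs_poly_mapping ` A"
  proof
    fix m assume "m \<in> {m. f m \<noteq> 0}"
    then have "Poly_Mapping.lookup m \<in> A" by (auto simp: f_def split: if_splits)
    then show "m \<in> Abs_poly_mapping ` A" by (intro image_eqI[of _ _ "Poly_Mapping.lookup m"]) simp_all
  qed
  have ff: "finite {m. f m \<noteq> 0}" by (rule finite_subset[OF sub]) (use fA in simp)
  define p where "p = Abs_poly_mapping f"
  have lp: "Poly_Mapping.lookup p = f" unfolding p_def using ff by simp
  have keysp: "Poly_Mapping.keys p = Abs_poly_mapping ` {\<alpha>\<in>A. c \<alpha> \<noteq> 0}"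
  proof
    show "Poly_Mapping.keys p \<subseteq> Abs_poly_mapping ` {\<alpha> \<in> A. c \<alpha> \<noteq> 0}"
    proof
      fix m assume "m \<in> Poly_Mapping.keys p"
      then have "Poly_Mapping.lookup m \<in> A" "c (Poly_Mapping.lookup m) \<noteq> 0" by (auto simp: in_keys_iff lp f_def split: if_splits)
      then show "m \<in> Abs_poly_mapping ` {\<alpha> \<in> A. c \<alpha> \<noteq> 0}" by (intro image_eqI[of _ _ "Poly_Mapping.lookup m"]) simp_all
    qed
    show "Abs_poly_mapping ` {\<alpha> \<in> A. c \<alpha> \<noteq> 0} \<subseteq> Poly_Mapping.keys p"
      using finsupp by (auto simp: in_keys_iff lp f_def)
  qed
  have inj: "inj_on Abs_poly_mapping {\<alpha>\<in>A. c \<alpha> \<noteq> 0}"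
  proof (rule inj_onI)
    fix a b assume ab: "a \<in> {\<alpha>\<in>A. c \<alpha> \<noteq> 0}" "b \<in> {\<alpha>\<in>A. c \<alpha> \<noteq> 0}" "Abs_poly_mapping a = Abs_poly_mapping b"
    have fa: "finite {v. a v \<noteq> 0}" "finite {v. b v \<noteq> 0}" using ab(1,2) finsupp by auto
    have "a = Poly_Mapping.lookup (Abs_poly_mapping a)" using fa(1) by simp
    also have "\<dots> = Poly_Mapping.lookup (Abs_poly_mapping b)" using ab(3) by (rule arg_cong)
    also have "\<dots> = b" using fa(2) by simp
    finally show "a = b" .
  qed
  have "p \<noteq> 0"
  proof
    assume "p = 0"
    then have "Poly_Mapping.keys p = {}" by simp
    with keysp nz show False by auto
  qed
  moreover have "poly_vars p \<subseteq> T"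
  proof
    fix v assume "v \<in> poly_vars p"
    then obtain m where m: "m \<in> Poly_Mapping.keys p" "v \<in> Poly_Mapping.keys m"
      unfolding poly_vars_def by (auto simp del: keysp)
    from m(1) have "m \<in> Abs_poly_mapping ` {\<alpha>\<in>A. c \<alpha> \<noteq> 0}" by (simp only: keysp)
    then obtain \<alpha> where a0: "\<alpha> \<in> {\<alpha>\<in>A. c \<alpha> \<noteq> 0}" and a2: "m = Abs_poly_mapping \<alpha>" by (rule imageE)
    have a1: "\<alpha> \<in> A" using a0 by simp
    have lm: "Poly_Mapping.lookup m = \<alpha>" unfolding a2 by (rule lookup_Abs_poly_mapping[OF finsupp[OF a1]])
    from m(2) have "Poly_Mapping.lookup m v \<noteq> 0" by (simp add: in_keys_iff)
    then have av: "\<alpha> v \<noteq> 0" by (simp add: lm)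
    show "v \<in> T"
    proof (rule ccontr)
      assume "v \<notin> T"
      then have "\<alpha> v = 0" by (rule A[OF a1])
      with av show False by simp
    qed
  qed
  moreover have "poly_eval p x = (\<Sum>\<alpha>\<in>A. c \<alpha> * (\<Prod>v\<in>T. x v ^ \<alpha> v))" for x
  proof -
    have "poly_eval p x = (\<Sum>\<alpha>\<in>{\<alpha>\<in>A. c \<alpha> \<noteq> 0}. Poly_Mapping.lookup p (Abs_poly_mapping \<alpha>) *
            (\<Prod>v\<in>Poly_Mapping.keys (Abs_poly_mapping \<alpha>). x v ^ Poly_Mapping.lookup (Abs_poly_mapping \<alpha>) v))"
      unfolding poly_eval_def keysp by (subst sum.reindex[OF inj]) (simp only: comp_def)
    also have "\<dots> = (\<Sum>\<alpha>\<in>{\<alpha>\<in>A. c \<alpha> \<noteq> 0}. c \<alpha> * (\<Prod>v\<in>T. x v ^ \<alpha> v))"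
    proof (rule sum.cong[OF refl])
      fix \<alpha> assume a: "\<alpha> \<in> {\<alpha>\<in>A. c \<alpha> \<noteq> 0}"
      have k: "Poly_Mapping.keys (Abs_poly_mapping \<alpha>) \<subseteq> T"
      proof
        fix v assume "v \<in> Poly_Mapping.keys (Abs_poly_mapping \<alpha>)"
        then have av: "\<alpha> v \<noteq> 0" using finsupp a by (simp add: in_keys_iff)
        have a1: "\<alpha> \<in> A" using a by simp
        show "v \<in> T"
        proof (rule ccontr)
          assume "v \<notin> T"
          then have "\<alpha> v = 0" by (rule A[OF a1])
          with av show False by simp
        qed
      qed
      show "Poly_Mapping.lookup p (Abs_poly_mapping \<alpha>) * (\<Prod>v\<in>Poly_Mapping.keys (Abs_poly_mapping \<alpha>). x v ^ Poly_Mapping.lookup (Abs_poly_mapping \<alpha>) v)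
            = c \<alpha> * (\<Prod>v\<in>T. x v ^ \<alpha> v)"
        using prod_keys_eq[OF fT k, of x] a finsupp by (simp add: lp f_def)
    qed
    also have "\<dots> = (\<Sum>\<alpha>\<in>A. c \<alpha> * (\<Prod>v\<in>T. x v ^ \<alpha> v))"
      by (rule sum.mono_neutral_left) (use fA in auto)
    finally show ?thesis .
  qed
  ultimately show ?thesis by (intro exI[of _ p]) simp
qed

lemma dependent:
  fixes f :: "'v \<Rightarrow> ('p \<Rightarrow> complex) \<Rightarrow> complex"
  assumes P: "finite P" and fT: "finite T" and cT: "card T = card P + 1"
    and fS: "\<And>S. S \<in> T \<Longrightarrow> f S \<in> ppol P 1"
  shows "\<exists>p::'v cpoly. p \<noteq> 0 \<and> poly_vars p \<subseteq> T \<and> (\<forall>\<mu>. poly_eval p (\<lambda>S. f S \<mu>) = 0)"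
proof -
  define N where "N = card P"
  define D where "D = (N+1)^N"
  define K where "K = (N+1)*D"
  define A where "A = pmon T D"
  define g where "g = (\<lambda>\<alpha> \<mu>. \<Prod>S\<in>T. f S \<mu> ^ \<alpha> S)"
  have fA: "finite A" using fT by (simp add: A_def finite_pmon)
  have "g \<alpha> \<in> ppol P K" if "\<alpha> \<in> A" for \<alpha>
  proof -
    have "g \<alpha> \<in> ppol P (\<Sum>S\<in>T. \<alpha> S * 1)"
      unfolding g_def by (rule ppol_prod[OF P fT]) (rule ppol_power[OF P fS])
    moreover have "(\<Sum>S\<in>T. \<alpha> S * 1) \<le> K"
    proof -
      have "(\<Sum>S\<in>T. \<alpha> S * 1) \<le> (\<Sum>S\<in>T. D)"
        using that by (intro sum_mono) (auto simp: A_def pmon_def)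
      then show ?thesis using cT by (simp add: K_def N_def)
    qed
    ultimately show ?thesis using ppol_mono[OF P] by blast
  qed
  then have "\<forall>\<alpha>\<in>A. \<exists>b. \<forall>\<mu>. g \<alpha> \<mu> = (\<Sum>\<beta>\<in>pmon P K. b \<beta> * pmono P \<beta> \<mu>)"
    by (auto simp: ppol_def)
  from bchoice[OF this] obtain b where b0: "\<forall>\<alpha>\<in>A. \<forall>\<mu>. g \<alpha> \<mu> = (\<Sum>\<beta>\<in>pmon P K. b \<alpha> \<beta> * pmono P \<beta> \<mu>)"
    by blast
  then have b: "\<And>\<alpha> \<mu>. \<alpha> \<in> A \<Longrightarrow> g \<alpha> \<mu> = (\<Sum>\<beta>\<in>pmon P K. b \<alpha> \<beta> * pmono P \<beta> \<mu>)"
    by blast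
  have cards: "card (pmon P K) < card A"
  proof -
    have cA: "card A = (D+1)^(N+1)" using fT cT by (simp add: A_def card_pmon N_def)
    have cP: "card (pmon P K) = (K+1)^N" using P by (simp add: card_pmon N_def)
    have "K + 1 \<le> (N+1)*(D+1)" by (simp add: K_def)
    then have "(K+1)^N \<le> ((N+1)*(D+1))^N" by (rule power_mono) simp
    also have "\<dots> = D * (D+1)^N" by (simp only: power_mult_distrib D_def)
    also have "\<dots> < (D+1) * (D+1)^N" by simp
    finally show ?thesis using cA cP by simp
  qed
  from lin_sys[OF finite_pmon[OF P] fA cards, of "\<lambda>\<beta> \<alpha>. b \<alpha> \<beta>"] obtain c where
    c: "\<exists>\<alpha>\<in>A. c \<alpha> \<noteq> 0" "\<And>\<beta>. \<beta> \<in> pmon P K \<Longrightarrow> (\<Sum>\<alpha>\<in>A. b \<alpha> \<beta> * c \<alpha>) = 0" by blast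
  have zero: "(\<Sum>\<alpha>\<in>A. c \<alpha> * g \<alpha> \<mu>) = 0" for \<mu>
  proof -
    have "(\<Sum>\<alpha>\<in>A. c \<alpha> * g \<alpha> \<mu>) = (\<Sum>\<alpha>\<in>A. \<Sum>\<beta>\<in>pmon P K. c \<alpha> * b \<alpha> \<beta> * pmono P \<beta> \<mu>)"
      by (rule sum.cong[OF refl]) (simp add: b sum_distrib_left mult.assoc)
    also have "\<dots> = (\<Sum>\<beta>\<in>pmon P K. (\<Sum>\<alpha>\<in>A. b \<alpha> \<beta> * c \<alpha>) * pmono P \<beta> \<mu>)"
      unfolding sum_distrib_right by (subst sum.swap) (auto intro!: sum.cong simp: mult_ac)
    also have "\<dots> = 0" using c(2) by simp
    finally show ?thesis .
  qed
  have Az: "\<And>\<alpha> v. \<alpha> \<in> A \<Longrightarrow> v \<notin> T \<Longrightarrow> \<alpha> v = 0" by (auto simp: A_def pmon_def)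
  have "\<exists>p::'v cpoly. p \<noteq> 0 \<and> poly_vars p \<subseteq> T \<and> (\<forall>x. poly_eval p x = (\<Sum>\<alpha>\<in>A. c \<alpha> * (\<Prod>v\<in>T. x v ^ \<alpha> v)))"
  proof (rule poly_from_coeffs)
    show "finite T" by (rule fT)
    show "finite A" by (rule fA)
    show "\<And>\<alpha> v. \<alpha> \<in> A \<Longrightarrow> v \<notin> T \<Longrightarrow> \<alpha> v = 0" by (rule Az)
    show "\<exists>\<alpha>\<in>A. c \<alpha> \<noteq> 0" by (rule c(1))
  qed
  then obtain p :: "'v cpoly" where
    p: "p \<noteq> 0" "poly_vars p \<subseteq> T" "\<And>x. poly_eval p x = (\<Sum>\<alpha>\<in>A. c \<alpha> * (\<Prod>v\<in>T. x v ^ \<alpha> v))"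
    by blast
  have "poly_eval p (\<lambda>S. f S \<mu>) = 0" for \<mu>
    using zero[of \<mu>] by (simp add: p(3) g_def)
  with p(1,2) show ?thesis by (intro exI[of _ p]) simp
qed



definition nbr :: "nat set \<Rightarrow> nat \<Rightarrow> nat \<Rightarrow> nat \<Rightarrow> nat set" where
  "nbr C a b0 i = (if i = a then C else if i \<notin> C then insert i (C - {a}) else insert b0 (C - {i}))"

lemma nbr_mem: "k \<in> nbr C a b0 i \<longleftrightarrow>
   (if i = a then k \<in> C else if i \<notin> C then (k = i \<or> (k \<in> C \<and> k \<noteq> a)) else (k = b0 \<or> (k \<in> C \<and> k \<noteq> i)))"
  by (auto simp: nbr_def)

locale nbr_ctx =
  fixes n :: nat and C :: "nat set" and a b0 :: nat
  assumes Csub: "C \<subseteq> {..<n}" and aC: "a \<in> C" and b0n: "b0 < n" and b0C: "b0 \<notin> C"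
begin

lemma finC: "finite C" using Csub finite_subset by blast

lemma nbr_sub: "i < n \<Longrightarrow> nbr C a b0 i \<subseteq> {..<n}"
  using Csub b0n aC by (auto simp: nbr_def)

lemma nbr_card: "i < n \<Longrightarrow> card (nbr C a b0 i) = card C"
proof -
  assume i: "i < n"
  have cC: "card C \<ge> 1" using aC finC by (metis One_nat_def Suc_leI card_gt_0_iff empty_iff)
  show ?thesis
  proof (cases "i = a")
    case True then show ?thesis by (simp add: nbr_def)
  next
    case False
    show ?thesis
    proof (cases "i \<in> C")
      case True
      have "card (insert b0 (C - {i})) = card (C - {i}) + 1" using b0C finC by simp
      also have "\<dots> = card C" using True finC cC by simp
      finally show ?thesis using True False by (simp add: nbr_def)
    next
      case iC: False
      have "card (insert i (C - {a})) = card (C - {a}) + 1" using iC finC by simp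
      also have "\<dots> = card C" using aC finC cC by simp
      finally show ?thesis using iC False by (simp add: nbr_def)
    qed
  qed
qed

lemma nbr_int: "card C \<le> card (nbr C a b0 i \<inter> C) + 1"
proof (cases "i = a")
  case True then show ?thesis by (simp add: nbr_def)
next
  case False
  show ?thesis
  proof (cases "i \<in> C")
    case True
    have "nbr C a b0 i \<inter> C = C - {i}" using True False b0C by (auto simp: nbr_def)
    then show ?thesis using True finC by (simp add: card_Diff_singleton)
  next
    case iC: False
    have "nbr C a b0 i \<inter> C = C - {a}" using iC False by (auto simp: nbr_def)
    then show ?thesis using aC finC by (simp add: card_Diff_singleton)
  qed
qed

definition dec :: "nat set \<Rightarrow> nat" where
  "dec S = (if S = C then a else if a \<notin> S then the_elem (S - C) else the_elem (C - S))"

lemma dec_nbr: "dec (nbr C a b0 i) = i"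
proof (cases "i = a")
  case True then show ?thesis by (simp add: nbr_def dec_def)
next
  case False
  show ?thesis
  proof (cases "i \<in> C")
    case True
    have ne: "insert b0 (C - {i}) \<noteq> C" using b0C by auto
    have aS: "a \<in> insert b0 (C - {i})" using aC False by auto
    have "C - insert b0 (C - {i}) = {i}" using True b0C by auto
    then show ?thesis using True False ne aS by (simp add: nbr_def dec_def)
  next
    case iC: False
    have ne: "insert i (C - {a}) \<noteq> C" using iC by auto
    have aS: "a \<notin> insert i (C - {a})" using False by auto
    have "insert i (C - {a}) - C = {i}" using iC by auto
    then show ?thesis using iC False ne aS by (simp add: nbr_def dec_def)
  qed
qed

lemma nbr_inj: "inj_on (nbr C a b0) X"
  by (rule inj_on_inverseI[where g = dec]) (rule dec_nbr)

lemma nbr_solve: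
  fixes \<delta> :: "nat \<Rightarrow> real"
  assumes eqs: "\<And>k. k < n \<Longrightarrow> (\<Sum>i\<in>{i. i < n \<and> k \<in> nbr C a b0 i}. \<delta> i) = 0"
  shows "\<And>i. i < n \<Longrightarrow> \<delta> i = 0"
proof -
  have cC: "card C \<ge> 1" using aC finC by (metis One_nat_def Suc_leI card_gt_0_iff empty_iff)
  have an: "a < n" using aC Csub by auto
  define Tot where "Tot = (\<Sum>i<n. \<delta> i)"
  have filt: "{i. i < n \<and> k \<in> nbr C a b0 i} = {i\<in>{..<n}. k \<in> nbr C a b0 i}" for k by auto
  have "0 = (\<Sum>k<n. \<Sum>i\<in>{i. i < n \<and> k \<in> nbr C a b0 i}. \<delta> i)"
    using eqs by simp
  also have "\<dots> = (\<Sum>k<n. \<Sum>i<n. if k \<in> nbr C a b0 i then \<delta> i else 0)"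
    by (rule sum.cong[OF refl]) (simp only: filt sum.inter_filter[OF finite_lessThan])
  also have "\<dots> = (\<Sum>i<n. \<Sum>k<n. if k \<in> nbr C a b0 i then \<delta> i else 0)"
    by (rule sum.swap)
  also have "\<dots> = (\<Sum>i<n. \<delta> i * real (card C))"
  proof (rule sum.cong[OF refl])
    fix i assume "i \<in> {..<n}"
    then have i: "i < n" by simp
    have "(\<Sum>k<n. if k \<in> nbr C a b0 i then \<delta> i else 0) = (\<Sum>k\<in>{k\<in>{..<n}. k \<in> nbr C a b0 i}. \<delta> i)"
      by (simp only: sum.inter_filter[OF finite_lessThan])
    also have "{k\<in>{..<n}. k \<in> nbr C a b0 i} = nbr C a b0 i" using nbr_sub[OF i] by auto
    finally show "(\<Sum>k<n. if k \<in> nbr C a b0 i then \<delta> i else 0) = \<delta> i * real (card C)"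
      using nbr_card[OF i] by simp
  qed
  also have "\<dots> = real (card C) * Tot" by (simp add: Tot_def sum_distrib_left mult.commute)
  finally have Tot0: "Tot = 0" using cC by simp
  have zC: "\<delta> i = 0" if i: "i \<in> C" "i \<noteq> a" for i
  proof -
    have "{j. j < n \<and> i \<in> nbr C a b0 j} = {..<n} - {i}"
      using i b0C Csub by (auto simp: nbr_mem)
    then have "(\<Sum>j\<in>{..<n} - {i}. \<delta> j) = 0" using eqs[of i] i Csub by auto
    moreover have "(\<Sum>j\<in>{..<n} - {i}. \<delta> j) = Tot - \<delta> i"
      using i Csub by (auto simp: Tot_def sum_diff1)
    ultimately show ?thesis using Tot0 by simp
  qed
  have zO: "\<delta> i = 0" if i: "i < n" "i \<notin> C" "i \<noteq> b0" for i
  proof -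
    have "{j. j < n \<and> i \<in> nbr C a b0 j} = {i}"
      using i aC by (auto simp: nbr_mem split: if_splits)
    then show ?thesis using eqs[of i] i by simp
  qed
  have zb: "\<delta> b0 = 0"
  proof -
    have "{j. j < n \<and> b0 \<in> nbr C a b0 j} = insert b0 (C - {a})"
      using b0C b0n Csub aC by (auto simp: nbr_mem split: if_splits)
    then have "\<delta> b0 + (\<Sum>j\<in>C - {a}. \<delta> j) = 0" using eqs[OF b0n] b0C finC by simp
    moreover have "(\<Sum>j\<in>C - {a}. \<delta> j) = 0" using zC by (intro sum.neutral) auto
    ultimately show ?thesis by simp
  qed
  have zo: "\<delta> i = 0" if "i < n" "i \<noteq> a" for i
    using zC zO zb that by (cases "i \<in> C"; cases "i = b0") auto
  have za: "\<delta> a = 0"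
  proof -
    have "Tot = \<delta> a + (\<Sum>j\<in>{..<n} - {a}. \<delta> j)"
      unfolding Tot_def using an by (simp add: sum.remove)
    moreover have "(\<Sum>j\<in>{..<n} - {a}. \<delta> j) = 0" using zo by (intro sum.neutral) auto
    ultimately show ?thesis using Tot0 by simp
  qed
  show "\<And>i. i < n \<Longrightarrow> \<delta> i = 0" using zo za by metis
qed

end



lemma finite_hyp: "finite (hyp_coords n d)"
  by (rule finite_subset[of _ "Pow {..<n}"]) (auto simp: hyp_coords_def)

lemma card_hyp: "card (hyp_coords n d) = n choose d"
  using n_subsets[of "{..<n}" d] by (simp add: hyp_coords_def)

definition hball :: "nat \<Rightarrow> nat \<Rightarrow> nat set \<Rightarrow> nat set set" where
  "hball n d C = {S \<in> hyp_coords n d. d \<le> card (S \<inter> C) + 2}"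

lemma card_hball:
  assumes C: "C \<in> hyp_coords n d" and dn: "d < n"
  shows "card (hball n d C) \<le> 1 + d * (n - d) + (d choose 2) * ((n - d) choose 2)"
proof -
  have Cs: "C \<subseteq> {..<n}" and cC: "card C = d" using C by (auto simp: hyp_coords_def)
  have fC: "finite C" using Cs finite_subset by blast
  define U where "U = {..<n} - C"
  have cU: "card U = n - d" unfolding U_def using Cs cC fC by (simp add: card_Diff_subset)
  have fU: "finite U" unfolding U_def by simp
  define Q where "Q = (\<lambda>k::nat. {X. X \<subseteq> C \<and> card X = k} \<times> {Y. Y \<subseteq> U \<and> card Y = k})"
  define g where "g = (\<lambda>S::nat set. (C - S, S - C))"
  have inj: "inj_on g (hball n d C)"
  proof (rule inj_onI)
    fix S S' assume "g S = g S'"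
    then have "C - S = C - S'" "S - C = S' - C" by (auto simp: g_def)
    then have "C - (C - S) \<union> (S - C) = C - (C - S') \<union> (S' - C)" by simp
    moreover have "C - (C - X) \<union> (X - C) = X" for X by blast
    ultimately show "S = S'" by simp
  qed
  have img: "g ` hball n d C \<subseteq> (\<Union>k<3. Q k)"
  proof
    fix z assume "z \<in> g ` hball n d C"
    then obtain S where S: "S \<in> hball n d C" "z = g S" by blast
    have Ss: "S \<subseteq> {..<n}" and cS: "card S = d" and dS: "d \<le> card (S \<inter> C) + 2"
      using S(1) by (auto simp: hball_def hyp_coords_def)
    have fS: "finite S" using Ss finite_subset by blast
    have c1: "card (C - S) = d - card (S \<inter> C)"
      using card_Diff_subset_Int[of C S] fC cC by (simp add: Int_commute)
    have c2: "card (S - C) = d - card (S \<inter> C)"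
      using card_Diff_subset_Int[of S C] fS cS by simp
    have k3: "d - card (S \<inter> C) < 3" using dS by linarith
    have "z \<in> Q (d - card (S \<inter> C))"
      using S(2) c1 c2 Ss by (auto simp: Q_def g_def U_def)
    then show "z \<in> (\<Union>k<3. Q k)" using k3 by blast
  qed
  have fQ: "finite (Q k)" for k
    unfolding Q_def by (rule finite_cartesian_product) (use fC fU in auto)
  have cQ: "card (Q k) = (d choose k) * ((n - d) choose k)" for k
    unfolding Q_def card_cartesian_product using n_subsets[OF fC, of k] n_subsets[OF fU, of k] cC cU by simp
  have "card (hball n d C) = card (g ` hball n d C)" using inj by (simp add: card_image)
  also have "\<dots> \<le> card (\<Union>k<3. Q k)" by (rule card_mono) (use fQ img in auto)
  also have "\<dots> \<le> (\<Sum>k<3. card (Q k))" by (rule card_UN_le) simp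
  also have "\<dots> = 1 + d * (n - d) + (d choose 2) * ((n - d) choose 2)"
    by (simp add: cQ eval_nat_numeral)
  finally show ?thesis .
qed

lemma packing:
  assumes d1: "1 \<le> d" and dn: "d < n"
    and hyp: "(1 + d * (n - d) + (d choose 2) * ((n - d) choose 2)) * r \<le> n choose d"
  shows "\<exists>c. (\<forall>j<r. c j \<in> hyp_coords n d) \<and> (\<forall>i<r. \<forall>j<r. i \<noteq> j \<longrightarrow> card (c i \<inter> c j) + 3 \<le> d)"
proof -
  define B where "B = 1 + d * (n - d) + (d choose 2) * ((n - d) choose 2)"
  have "m \<le> r \<Longrightarrow> \<exists>c. (\<forall>j<m. c j \<in> hyp_coords n d) \<and> (\<forall>i<m. \<forall>j<m. i \<noteq> j \<longrightarrow> card (c i \<inter> c j) + 3 \<le> d)" for m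
  proof (induction m)
    case 0 then show ?case by auto
  next
    case (Suc m)
    then obtain c where c: "\<forall>j<m. c j \<in> hyp_coords n d" "\<forall>i<m. \<forall>j<m. i \<noteq> j \<longrightarrow> card (c i \<inter> c j) + 3 \<le> d"
      by auto
    define bad where "bad = (\<Union>i<m. hball n d (c i))"
    have "card bad \<le> (\<Sum>i<m. card (hball n d (c i)))" unfolding bad_def by (rule card_UN_le) simp
    also have "\<dots> \<le> (\<Sum>i<m. B)" using c(1) card_hball dn by (intro sum_mono) (auto simp: B_def)
    also have "\<dots> = m * B" by simp
    also have "\<dots> < r * B"
    proof -
      have "B > 0" by (simp add: B_def)
      moreover have "m < r" using Suc.prems by simp
      ultimately show ?thesis by (rule mult_strict_right_mono[rotated])
    qed
    also have "\<dots> \<le> card (hyp_coords n d)" using hyp by (simp add: B_def card_hyp mult.commute)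
    finally have "card bad < card (hyp_coords n d)" .
    moreover have fb: "finite bad" unfolding bad_def hball_def using finite_hyp by auto
    ultimately have "\<not> hyp_coords n d \<subseteq> bad"
      using card_mono[OF fb, of "hyp_coords n d"] by linarith
    then obtain S where S: "S \<in> hyp_coords n d" "S \<notin> bad" by blast
    define c' where "c' = c(m := S)"
    have far: "card (S \<inter> c i) + 3 \<le> d" if "i < m" for i
    proof -
      have "\<not> d \<le> card (S \<inter> c i) + 2" using S that by (auto simp: bad_def hball_def)
      then show ?thesis by linarith
    qed
    have "\<forall>j<Suc m. c' j \<in> hyp_coords n d" using c(1) S by (auto simp: c'_def less_Suc_eq)
    moreover have "\<forall>i<Suc m. \<forall>j<Suc m. i \<noteq> j \<longrightarrow> card (c' i \<inter> c' j) + 3 \<le> d"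
    proof (intro allI impI)
      fix i j assume ij: "i < Suc m" "j < Suc m" "i \<noteq> j"
      show "card (c' i \<inter> c' j) + 3 \<le> d"
      proof (cases "i = m")
        case True
        then have "j < m" using ij by simp
        then show ?thesis using far True ij by (simp add: c'_def)
      next
        case False
        note iF = False
        show ?thesis
        proof (cases "j = m")
          case True
          then have "i < m" using ij iF by simp
          then show ?thesis using far[of i] True iF by (simp add: c'_def Int_commute)
        next
          case False
          then show ?thesis using c(2) ij iF by (simp add: c'_def)
        qed
      qed
    qed
    ultimately show ?case by blast
  qed
  then show ?thesis by blast
qed



lemma dominance:
  fixes F :: "'a set" and a :: "'a \<Rightarrow> complex" and E :: "'a \<Rightarrow> real" and H :: "'a \<Rightarrow> real \<Rightarrow> complex"
  assumes fF: "finite F" and neF: "F \<noteq> {}" and nz: "\<And>\<alpha>. \<alpha> \<in> F \<Longrightarrow> a \<alpha> \<noteq> 0"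
    and inj: "inj_on E F" and lim: "\<And>\<alpha>. \<alpha> \<in> F \<Longrightarrow> (H \<alpha> \<longlongrightarrow> 1) at_top"
  shows "\<exists>t>0. (\<Sum>\<alpha>\<in>F. a \<alpha> * complex_of_real (t powr E \<alpha>) * H \<alpha> t) \<noteq> 0"
proof -
  have "Max (E ` F) \<in> E ` F" using fF neF by (intro Max_in) auto
  then obtain \<alpha>0 where a0: "\<alpha>0 \<in> F" "E \<alpha>0 = Max (E ` F)" by (metis imageE)
  have lt: "E \<alpha> < E \<alpha>0" if "\<alpha> \<in> F" "\<alpha> \<noteq> \<alpha>0" for \<alpha>
  proof -
    have "E \<alpha> \<le> E \<alpha>0" using a0 that fF by simp
    moreover have "E \<alpha> \<noteq> E \<alpha>0" using inj that a0(1) by (auto dest: inj_onD)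
    ultimately show ?thesis by simp
  qed
  define G where "G = (\<lambda>t. \<Sum>\<alpha>\<in>F. a \<alpha> * complex_of_real (t powr (E \<alpha> - E \<alpha>0)) * H \<alpha> t)"
  have term_lim: "((\<lambda>t. a \<alpha> * complex_of_real (t powr (E \<alpha> - E \<alpha>0)) * H \<alpha> t) \<longlongrightarrow>
        (if \<alpha> = \<alpha>0 then a \<alpha>0 else 0)) at_top" if "\<alpha> \<in> F" for \<alpha>
  proof (cases "\<alpha> = \<alpha>0")
    case True
    have ev: "\<forall>\<^sub>F t in at_top. a \<alpha>0 * H \<alpha>0 t = a \<alpha> * complex_of_real (t powr (E \<alpha> - E \<alpha>0)) * H \<alpha> t"
      using eventually_gt_at_top[of "0::real"] by eventually_elim (simp add: True)
    have "((\<lambda>t. a \<alpha>0 * H \<alpha>0 t) \<longlongrightarrow> a \<alpha>0 * 1) at_top"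
      by (intro tendsto_intros lim a0(1))
    then have "((\<lambda>t. a \<alpha> * complex_of_real (t powr (E \<alpha> - E \<alpha>0)) * H \<alpha> t) \<longlongrightarrow> a \<alpha>0) at_top"
      using ev by (simp add: tendsto_cong)
    then show ?thesis using True by simp
  next
    case False
    have "((\<lambda>t::real. t powr (E \<alpha> - E \<alpha>0)) \<longlongrightarrow> 0) at_top"
      by (rule tendsto_neg_powr) (use lt[OF that False] in \<open>simp_all add: filterlim_ident\<close>)
    then have "((\<lambda>t. complex_of_real (t powr (E \<alpha> - E \<alpha>0))) \<longlongrightarrow> complex_of_real 0) at_top"
      by (rule tendsto_of_real)
    then have "((\<lambda>t. a \<alpha> * complex_of_real (t powr (E \<alpha> - E \<alpha>0)) * H \<alpha> t) \<longlongrightarrow> a \<alpha> * complex_of_real 0 * 1) at_top"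
      by (intro tendsto_mult tendsto_const lim that)
    then show ?thesis using False by simp
  qed
  have "(G \<longlongrightarrow> (\<Sum>\<alpha>\<in>F. if \<alpha> = \<alpha>0 then a \<alpha>0 else 0)) at_top"
    unfolding G_def by (rule tendsto_sum) (rule term_lim)
  moreover have "(\<Sum>\<alpha>\<in>F. if \<alpha> = \<alpha>0 then a \<alpha>0 else 0) = a \<alpha>0"
    using fF a0(1) by simp
  ultimately have "(G \<longlongrightarrow> a \<alpha>0) at_top" by simp
  then have "\<forall>\<^sub>F t in at_top. G t \<noteq> 0"
    using nz[OF a0(1)] by (rule tendsto_imp_eventually_ne)
  then have "\<forall>\<^sub>F t in at_top. G t \<noteq> 0 \<and> t > 0"
    using eventually_gt_at_top[of "0::real"] by eventually_elim simp
  then obtain t where t: "G t \<noteq> 0" "t > 0"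
    using eventually_happens'[of "at_top::real filter"] by auto
  have "(\<Sum>\<alpha>\<in>F. a \<alpha> * complex_of_real (t powr E \<alpha>) * H \<alpha> t) = complex_of_real (t powr E \<alpha>0) * G t"
    unfolding G_def sum_distrib_left
  proof (rule sum.cong[OF refl])
    fix \<alpha> assume "\<alpha> \<in> F"
    have "t powr E \<alpha> = t powr E \<alpha>0 * t powr (E \<alpha> - E \<alpha>0)"
      by (simp add: powr_add[symmetric])
    then show "a \<alpha> * complex_of_real (t powr E \<alpha>) * H \<alpha> t =
          complex_of_real (t powr E \<alpha>0) * (a \<alpha> * complex_of_real (t powr (E \<alpha> - E \<alpha>0)) * H \<alpha> t)"
      by (simp add: mult_ac)
  qed
  moreover have "complex_of_real (t powr E \<alpha>0) \<noteq> 0" using t(2) by simp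
  ultimately show ?thesis using t by auto
qed



lemma sum_w_split:
  fixes x M :: real
  assumes "finite S"
  shows "(\<Sum>k\<in>S. M * (if k \<in> C then 1 else 0) + x ^ f k) = M * real (card (S \<inter> C)) + (\<Sum>k\<in>S. x ^ f k)"
proof -
  have "(\<Sum>k\<in>S. (if k \<in> C then 1 else 0::real)) = (\<Sum>k\<in>{k\<in>S. k \<in> C}. 1)"
    by (simp only: sum.inter_filter[OF assms])
  also have "\<dots> = real (card (S \<inter> C))" by (simp add: Int_def)
  finally have "(\<Sum>k\<in>S. (if k \<in> C then 1 else 0::real)) = real (card (S \<inter> C))" .
  then show ?thesis by (simp add: sum.distrib sum_distrib_left[symmetric])
qed

lemma prod_powr_complex:
  fixes t :: real
  assumes "t > 0"
  shows "(\<Prod>k\<in>S. complex_of_real (t powr g k)) = complex_of_real (t powr (\<Sum>k\<in>S. g k))"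
proof -
  have "(\<Prod>k\<in>S. complex_of_real (t powr g k)) = complex_of_real (\<Prod>k\<in>S. t powr g k)"
    by (simp only: of_real_prod)
  also have "(\<Prod>k\<in>S. t powr g k) = t powr (\<Sum>k\<in>S. g k)"
    using assms by (simp add: powr_sum)
  finally show ?thesis .
qed

lemma pow_powr_complex:
  fixes t :: real
  assumes "t > 0"
  shows "complex_of_real (t powr v) ^ m = complex_of_real (t powr (real m * v))"
proof -
  have "(t powr v) ^ m = (t powr v) powr real m" using assms by (simp add: powr_realpow)
  also have "\<dots> = t powr (real m * v)" by (simp add: powr_powr mult.commute)
  finally show ?thesis by (metis of_real_power)
qed

lemma divmod_unique:
  fixes j j' k k' n :: nat
  assumes "k < n" "k' < n" "j' * n + k' = j * n + k"
  shows "j' = j \<and> k' = k"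
proof -
  have "(j' * n + k') div n = (j * n + k) div n" using assms(3) by simp
  then have "j' = j" using assms(1,2) by simp
  then show ?thesis using assms(3) by simp
qed

locale lowctx =
  fixes n d r :: nat and c :: "nat \<Rightarrow> nat set"
  assumes d1: "1 \<le> d" and dn: "d < n"
    and cen: "\<And>j. j < r \<Longrightarrow> c j \<in> hyp_coords n d"
    and far: "\<And>i j. i < r \<Longrightarrow> j < r \<Longrightarrow> i \<noteq> j \<Longrightarrow> card (c i \<inter> c j) + 3 \<le> d"
begin

definition "aa j = (SOME x. x \<in> c j)"
definition "bb j = (SOME b. b < n \<and> b \<notin> c j)"
definition "Phi q = nbr (c (fst q)) (aa (fst q)) (bb (fst q)) (snd q)"
definition "Pidx = {..<r} \<times> {..<n}"
definition "TT = Phi ` Pidx"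

lemma csub: "j < r \<Longrightarrow> c j \<subseteq> {..<n}" and ccard: "j < r \<Longrightarrow> card (c j) = d"
  using cen by (auto simp: hyp_coords_def)

lemma cfin: "j < r \<Longrightarrow> finite (c j)" by (rule finite_subset[OF csub]) simp_all

lemma nctx: "j < r \<Longrightarrow> nbr_ctx n (c j) (aa j) (bb j)"
proof -
  assume j: "j < r"
  have "c j \<noteq> {}" using ccard[OF j] d1 by auto
  then have a: "aa j \<in> c j" unfolding aa_def by (rule someI_ex[OF ex_in_conv[THEN iffD2]])
  have "\<not> {..<n} \<subseteq> c j"
  proof
    assume "{..<n} \<subseteq> c j"
    then have "card {..<n} \<le> card (c j)" using cfin[OF j] by (rule card_mono[rotated])
    then show False using ccard[OF j] dn by simp
  qed
  then have "\<exists>b. b < n \<and> b \<notin> c j" by auto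
  then have b: "bb j < n \<and> bb j \<notin> c j" unfolding bb_def by (rule someI_ex)
  show ?thesis using a b csub[OF j] by unfold_locales auto
qed

lemma Phi_hyp: "q \<in> Pidx \<Longrightarrow> Phi q \<in> hyp_coords n d"
proof -
  assume q: "q \<in> Pidx"
  then have j: "fst q < r" and i: "snd q < n" by (auto simp: Pidx_def)
  interpret nbr_ctx n "c (fst q)" "aa (fst q)" "bb (fst q)" by (rule nctx[OF j])
  show ?thesis using nbr_sub[OF i] nbr_card[OF i] ccard[OF j] by (simp add: Phi_def hyp_coords_def)
qed

lemma Phi_own: "q \<in> Pidx \<Longrightarrow> d \<le> card (Phi q \<inter> c (fst q)) + 1"
proof -
  assume q: "q \<in> Pidx"
  then have j: "fst q < r" and i: "snd q < n" by (auto simp: Pidx_def)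
  interpret nbr_ctx n "c (fst q)" "aa (fst q)" "bb (fst q)" by (rule nctx[OF j])
  show ?thesis using nbr_int[of "snd q"] ccard[OF j] by (simp add: Phi_def)
qed

lemma Phi_other:
  assumes q: "q \<in> Pidx" and j': "j' < r" "j' \<noteq> fst q"
  shows "card (Phi q \<inter> c j') + 2 \<le> d"
proof -
  define S where "S = Phi q"
  define j where "j = fst q"
  have j: "j < r" using q by (auto simp: Pidx_def j_def)
  have S: "S \<in> hyp_coords n d" using Phi_hyp[OF q] by (simp add: S_def)
  then have Ss: "S \<subseteq> {..<n}" and cS: "card S = d" by (auto simp: hyp_coords_def)
  have fS: "finite S" by (rule finite_subset[OF Ss]) simp
  have own: "d \<le> card (S \<inter> c j) + 1" using Phi_own[OF q] by (simp add: S_def j_def)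
  have "card (S - c j) = card S - card (S \<inter> c j)" using fS by (simp add: card_Diff_subset_Int)
  then have d1': "card (S - c j) \<le> 1" using own cS by simp
  have "S \<inter> c j' \<subseteq> (c j \<inter> c j') \<union> (S - c j)" by blast
  then have "card (S \<inter> c j') \<le> card ((c j \<inter> c j') \<union> (S - c j))"
    by (rule card_mono[rotated]) (use fS cfin[OF j] in auto)
  also have "\<dots> \<le> card (c j \<inter> c j') + card (S - c j)" by (rule card_Un_le)
  finally have "card (S \<inter> c j') \<le> card (c j \<inter> c j') + 1" using d1' by simp
  moreover have "card (c j \<inter> c j') + 3 \<le> d" using far[OF j j'(1)] j'(2) by (simp add: j_def)
  ultimately show ?thesis by (simp add: S_def)
qed

lemma Phi_inj: "inj_on Phi Pidx"
proof (rule inj_onI)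
  fix q q' assume q: "q \<in> Pidx" and q': "q' \<in> Pidx" and eq: "Phi q = Phi q'"
  have "fst q = fst q'"
  proof (rule ccontr)
    assume ne: "fst q \<noteq> fst q'"
    have "card (Phi q' \<inter> c (fst q)) + 2 \<le> d" using Phi_other[OF q'] q ne by (auto simp: Pidx_def)
    moreover have "d \<le> card (Phi q \<inter> c (fst q)) + 1" by (rule Phi_own[OF q])
    ultimately show False using eq by simp
  qed
  moreover
  have j: "fst q < r" using q by (auto simp: Pidx_def)
  interpret nbr_ctx n "c (fst q)" "aa (fst q)" "bb (fst q)" by (rule nctx[OF j])
  have "nbr (c (fst q)) (aa (fst q)) (bb (fst q)) (snd q) = nbr (c (fst q)) (aa (fst q)) (bb (fst q)) (snd q')"
    using eq \<open>fst q = fst q'\<close> by (simp add: Phi_def)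
  then have "dec (nbr (c (fst q)) (aa (fst q)) (bb (fst q)) (snd q)) = dec (nbr (c (fst q)) (aa (fst q)) (bb (fst q)) (snd q'))"
    by (rule arg_cong)
  then have "snd q = snd q'" by (simp only: dec_nbr)
  ultimately show "q = q'" by (simp add: prod_eq_iff)
qed

lemma TT_hyp: "TT \<subseteq> hyp_coords n d" using Phi_hyp by (auto simp: TT_def)

lemma card_TT: "card TT = n * r"
  unfolding TT_def using card_image[OF Phi_inj] by (simp add: Pidx_def card_cartesian_product)

lemma finite_Pidx: "finite Pidx" by (simp add: Pidx_def)

end



context lowctx begin

definition "MM = real d + 1"
definition "ww x j k = MM * (if k \<in> c j then 1 else 0) + (x::real) ^ (j * n + k + 1)"
definition "ee x j S = (\<Sum>k\<in>S. ww x j k)"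
definition "vv x q = ee x (fst q) (Phi q)"
definition "EE x \<alpha> = (\<Sum>q\<in>Pidx. real (Poly_Mapping.lookup \<alpha> (Phi q)) * vv x q)"

lemma Phi_fin: "q \<in> Pidx \<Longrightarrow> finite (Phi q)"
  using Phi_hyp[of q] finite_hyp by (auto simp: hyp_coords_def intro: finite_subset[of _ "{..<n}"])

lemma Phi_sub: "q \<in> Pidx \<Longrightarrow> Phi q \<subseteq> {..<n}"
  using Phi_hyp[of q] by (auto simp: hyp_coords_def)

lemma Phi_cardd: "q \<in> Pidx \<Longrightarrow> card (Phi q) = d"
  using Phi_hyp[of q] by (auto simp: hyp_coords_def)

lemma ee_split: "finite S \<Longrightarrow> ee x j S = MM * real (card (S \<inter> c j)) + (\<Sum>k\<in>S. x ^ (j * n + k + 1))"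
  unfolding ee_def ww_def by (rule sum_w_split)

lemma ee_bound:
  assumes q: "q \<in> Pidx" and j': "j' < r" "j' \<noteq> fst q" and x: "0 < x" "x < 1"
  shows "ee x j' (Phi q) - vv x q \<le> -1"
proof -
  define S where "S = Phi q"
  have fS: "finite S" using Phi_fin[OF q] by (simp add: S_def)
  have cS: "card S = d" using Phi_cardd[OF q] by (simp add: S_def)
  have "(\<Sum>k\<in>S. x ^ (j' * n + k + 1)) \<le> (\<Sum>k\<in>S. 1)"
    by (rule sum_mono, rule power_le_one) (use x in auto)
  then have up: "ee x j' S \<le> MM * real (card (S \<inter> c j')) + real d"
    using ee_split[OF fS, of x j'] cS by simp
  have "0 \<le> (\<Sum>k\<in>S. x ^ (fst q * n + k + 1))" by (rule sum_nonneg) (use x in simp)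
  then have lo: "vv x q \<ge> MM * real (card (S \<inter> c (fst q)))"
    using ee_split[OF fS, of x "fst q"] by (simp add: vv_def S_def)
  have "card (S \<inter> c j') + 2 \<le> d" using Phi_other[OF q j'] by (simp add: S_def)
  moreover have "d \<le> card (S \<inter> c (fst q)) + 1" using Phi_own[OF q] by (simp add: S_def)
  ultimately have h: "real (card (S \<inter> c j')) + 1 \<le> real (card (S \<inter> c (fst q)))" by linarith
  have "MM \<ge> 0" by (simp add: MM_def)
  from mult_left_mono[OF h this]
  have "MM * real (card (S \<inter> c j')) + MM \<le> MM * real (card (S \<inter> c (fst q)))"
    by (simp add: distrib_left)
  then show ?thesis using up lo by (simp add: S_def MM_def)
qed

definition "dl \<alpha> \<alpha>' q = real (Poly_Mapping.lookup \<alpha> (Phi q)) - real (Poly_Mapping.lookup \<alpha>' (Phi q))"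

definition "qp \<alpha> \<alpha>' = [: \<Sum>q\<in>Pidx. dl \<alpha> \<alpha>' q * MM * real (card (Phi q \<inter> c (fst q))) :]
   + (\<Sum>q\<in>Pidx. \<Sum>k\<in>Phi q. monom (dl \<alpha> \<alpha>' q) (fst q * n + k + 1))"

lemma poly_qp: "poly (qp \<alpha> \<alpha>') x = EE x \<alpha> - EE x \<alpha>'"
proof -
  have "EE x \<alpha> - EE x \<alpha>' = (\<Sum>q\<in>Pidx. dl \<alpha> \<alpha>' q * vv x q)"
    unfolding EE_def dl_def by (simp add: sum_subtractf left_diff_distrib)
  also have "\<dots> = (\<Sum>q\<in>Pidx. dl \<alpha> \<alpha>' q * MM * real (card (Phi q \<inter> c (fst q))) +
        (\<Sum>k\<in>Phi q. dl \<alpha> \<alpha>' q * x ^ (fst q * n + k + 1)))"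
  proof (rule sum.cong[OF refl])
    fix q assume q: "q \<in> Pidx"
    show "dl \<alpha> \<alpha>' q * vv x q = dl \<alpha> \<alpha>' q * MM * real (card (Phi q \<inter> c (fst q))) +
        (\<Sum>k\<in>Phi q. dl \<alpha> \<alpha>' q * x ^ (fst q * n + k + 1))"
      unfolding vv_def ee_split[OF Phi_fin[OF q]] by (simp add: distrib_left sum_distrib_left mult.assoc)
  qed
  also have "\<dots> = poly (qp \<alpha> \<alpha>') x"
    by (simp add: qp_def poly_sum poly_monom sum.distrib)
  finally show ?thesis by simp
qed

lemma coeff_qp:
  assumes j: "j < r" and k: "k < n"
  shows "coeff (qp \<alpha> \<alpha>') (j * n + k + 1) = (\<Sum>i\<in>{i. i < n \<and> k \<in> Phi (j, i)}. dl \<alpha> \<alpha>' (j, i))"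
proof -
  have inner: "(\<Sum>k'\<in>Phi q. if fst q * n + k' + 1 = j * n + k + 1 then dl \<alpha> \<alpha>' q else 0)
      = (if fst q = j \<and> k \<in> Phi q then dl \<alpha> \<alpha>' q else 0)" if q: "q \<in> Pidx" for q
  proof -
    have "(\<Sum>k'\<in>Phi q. if fst q * n + k' + 1 = j * n + k + 1 then dl \<alpha> \<alpha>' q else 0)
        = (\<Sum>k'\<in>Phi q. if fst q = j \<and> k' = k then dl \<alpha> \<alpha>' q else 0)"
    proof (rule sum.cong[OF refl])
      fix k' assume "k' \<in> Phi q"
      then have "k' < n" using Phi_sub[OF q] by auto
      then have "(fst q * n + k' + 1 = j * n + k + 1) = (fst q = j \<and> k' = k)"
        using divmod_unique[of k n k' "fst q" j] k by auto
      then show "(if fst q * n + k' + 1 = j * n + k + 1 then dl \<alpha> \<alpha>' q else 0) =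
                 (if fst q = j \<and> k' = k then dl \<alpha> \<alpha>' q else 0)" by simp
    qed
    also have "\<dots> = (if fst q = j \<and> k \<in> Phi q then dl \<alpha> \<alpha>' q else 0)"
      using Phi_fin[OF q] by (cases "fst q = j") simp_all
    finally show ?thesis .
  qed
  have "coeff (qp \<alpha> \<alpha>') (j * n + k + 1) =
      (\<Sum>q\<in>Pidx. \<Sum>k'\<in>Phi q. if fst q * n + k' + 1 = j * n + k + 1 then dl \<alpha> \<alpha>' q else 0)"
    by (simp add: qp_def coeff_sum)
  also have "\<dots> = (\<Sum>q\<in>Pidx. if fst q = j \<and> k \<in> Phi q then dl \<alpha> \<alpha>' q else 0)"
    by (rule sum.cong[OF refl]) (rule inner)
  also have "\<dots> = (\<Sum>j'<r. \<Sum>i<n. if j' = j \<and> k \<in> Phi (j', i) then dl \<alpha> \<alpha>' (j', i) else 0)"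
    unfolding Pidx_def sum.cartesian_product by (rule sum.cong) auto
  also have "\<dots> = (\<Sum>j'<r. if j' = j then (\<Sum>i<n. if k \<in> Phi (j, i) then dl \<alpha> \<alpha>' (j, i) else 0) else 0)"
    by (rule sum.cong[OF refl]) auto
  also have "\<dots> = (\<Sum>i<n. if k \<in> Phi (j, i) then dl \<alpha> \<alpha>' (j, i) else 0)"
    using j by simp
  also have "\<dots> = (\<Sum>i\<in>{i\<in>{..<n}. k \<in> Phi (j, i)}. dl \<alpha> \<alpha>' (j, i))"
    by (simp only: sum.inter_filter[OF finite_lessThan])
  also have "{i\<in>{..<n}. k \<in> Phi (j, i)} = {i. i < n \<and> k \<in> Phi (j, i)}" by auto
  finally show ?thesis .
qed

lemma qp_nonzero:
  assumes ka: "Poly_Mapping.keys \<alpha> \<subseteq> TT" and ka': "Poly_Mapping.keys \<alpha>' \<subseteq> TT" and ne: "\<alpha> \<noteq> \<alpha>'"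
  shows "qp \<alpha> \<alpha>' \<noteq> 0"
proof
  assume q0: "qp \<alpha> \<alpha>' = 0"
  have dl0: "dl \<alpha> \<alpha>' (j, i) = 0" if j: "j < r" and i: "i < n" for j i
  proof -
    interpret nbr_ctx n "c j" "aa j" "bb j" by (rule nctx[OF j])
    have "\<And>k. k < n \<Longrightarrow> (\<Sum>i\<in>{i. i < n \<and> k \<in> nbr (c j) (aa j) (bb j) i}. dl \<alpha> \<alpha>' (j, i)) = 0"
    proof -
      fix k assume k: "k < n"
      have "coeff (qp \<alpha> \<alpha>') (j * n + k + 1) = 0" using q0 by simp
      then show "(\<Sum>i\<in>{i. i < n \<and> k \<in> nbr (c j) (aa j) (bb j) i}. dl \<alpha> \<alpha>' (j, i)) = 0"
        using coeff_qp[OF j k, of \<alpha> \<alpha>'] by (simp add: Phi_def)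
    qed
    from nbr_solve[of "\<lambda>i. dl \<alpha> \<alpha>' (j, i)", OF this i] show ?thesis .
  qed
  have "Poly_Mapping.lookup \<alpha> S = Poly_Mapping.lookup \<alpha>' S" for S
  proof (cases "S \<in> TT")
    case True
    then obtain q where q: "q \<in> Pidx" "S = Phi q" by (auto simp: TT_def)
    then have "dl \<alpha> \<alpha>' (fst q, snd q) = 0" by (intro dl0) (auto simp: Pidx_def)
    then show ?thesis using q by (simp add: dl_def)
  next
    case False
    then have "S \<notin> Poly_Mapping.keys \<alpha>" "S \<notin> Poly_Mapping.keys \<alpha>'" using ka ka' by auto
    then show ?thesis by (simp add: in_keys_iff)
  qed
  then have "\<alpha> = \<alpha>'" by (intro poly_mapping_eqI)
  with ne show False by simp
qed

end



context lowctx begin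

definition "hh x q t = (\<Sum>j'<r. complex_of_real (t powr (ee x j' (Phi q) - vv x q)))"

lemma hh_lim:
  assumes q: "q \<in> Pidx" and x: "0 < x" "x < 1"
  shows "(hh x q \<longlongrightarrow> 1) at_top"
proof -
  have j: "fst q < r" using q by (auto simp: Pidx_def)
  have tl: "((\<lambda>t. complex_of_real (t powr (ee x j' (Phi q) - vv x q))) \<longlongrightarrow> (if j' = fst q then 1 else 0)) at_top"
    if j': "j' < r" for j'
  proof (cases "j' = fst q")
    case True
    have ev: "\<forall>\<^sub>F t in at_top. 1 = complex_of_real (t powr (ee x j' (Phi q) - vv x q))"
      using eventually_gt_at_top[of "0::real"] by eventually_elim (simp add: True vv_def)
    have "((\<lambda>t. complex_of_real (t powr (ee x j' (Phi q) - vv x q))) \<longlongrightarrow> 1) at_top"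
      by (rule Lim_transform_eventually[OF tendsto_const ev])
    then show ?thesis using True by simp
  next
    case False
    have neg: "ee x j' (Phi q) - vv x q < 0" using ee_bound[OF q j' False x] by simp
    have "((\<lambda>t::real. t powr (ee x j' (Phi q) - vv x q)) \<longlongrightarrow> 0) at_top"
      by (rule tendsto_neg_powr[OF neg]) (simp add: filterlim_ident)
    then have "((\<lambda>t. complex_of_real (t powr (ee x j' (Phi q) - vv x q))) \<longlongrightarrow> complex_of_real 0) at_top"
      by (rule tendsto_of_real)
    then show ?thesis using False by simp
  qed
  have "(hh x q \<longlongrightarrow> (\<Sum>j'<r. if j' = fst q then 1 else 0)) at_top"
    unfolding hh_def[abs_def] by (rule tendsto_sum) (rule tl, simp)
  moreover have "(\<Sum>j'<r. if j' = fst q then (1::complex) else 0) = 1" using j by simp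
  ultimately show ?thesis by simp
qed

definition "yy x t = (\<lambda>S. if S \<in> hyp_coords n d then (\<Sum>j<r. \<Prod>k\<in>S. complex_of_real (t powr ww x j k)) else 0)"

lemma yy_in: "yy x t \<in> secant_param_image n d r"
  unfolding secant_param_image_def yy_def
  by (intro CollectI exI[of _ "\<lambda>j k. complex_of_real (t powr ww x j k)"]) simp

lemma yy_Phi:
  assumes q: "q \<in> Pidx" and t: "t > 0"
  shows "yy x t (Phi q) = complex_of_real (t powr vv x q) * hh x q t"
proof -
  have "yy x t (Phi q) = (\<Sum>j<r. \<Prod>k\<in>Phi q. complex_of_real (t powr ww x j k))"
    using Phi_hyp[OF q] by (simp add: yy_def)
  also have "\<dots> = (\<Sum>j<r. complex_of_real (t powr ee x j (Phi q)))"
    by (rule sum.cong[OF refl]) (simp only: prod_powr_complex[OF t] ee_def)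
  also have "\<dots> = (\<Sum>j<r. complex_of_real (t powr vv x q) * complex_of_real (t powr (ee x j (Phi q) - vv x q)))"
  proof (rule sum.cong[OF refl])
    fix j
    have "t powr ee x j (Phi q) = t powr vv x q * t powr (ee x j (Phi q) - vv x q)"
      by (simp add: powr_add[symmetric])
    then show "complex_of_real (t powr ee x j (Phi q)) =
        complex_of_real (t powr vv x q) * complex_of_real (t powr (ee x j (Phi q) - vv x q))"
      by simp
  qed
  also have "\<dots> = complex_of_real (t powr vv x q) * hh x q t"
    by (simp add: hh_def sum_distrib_left)
  finally show ?thesis .
qed

lemma finite_TT: "finite TT" by (simp add: TT_def finite_Pidx)

lemma eval_yy:
  fixes p :: "nat set cpoly"
  assumes vars: "poly_vars p \<subseteq> TT" and t: "t > 0"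
  shows "poly_eval p (yy x t) = (\<Sum>\<alpha>\<in>Poly_Mapping.keys p. Poly_Mapping.lookup p \<alpha> *
           complex_of_real (t powr EE x \<alpha>) * (\<Prod>q\<in>Pidx. hh x q t ^ Poly_Mapping.lookup \<alpha> (Phi q)))"
  unfolding poly_eval_def
proof (rule sum.cong[OF refl])
  fix \<alpha> assume a: "\<alpha> \<in> Poly_Mapping.keys p"
  have ka: "Poly_Mapping.keys \<alpha> \<subseteq> TT" using vars a by (auto simp: poly_vars_def)
  have "(\<Prod>v\<in>Poly_Mapping.keys \<alpha>. yy x t v ^ Poly_Mapping.lookup \<alpha> v) = (\<Prod>v\<in>TT. yy x t v ^ Poly_Mapping.lookup \<alpha> v)"
    by (rule prod_keys_eq[OF finite_TT ka])
  also have "\<dots> = (\<Prod>q\<in>Pidx. yy x t (Phi q) ^ Poly_Mapping.lookup \<alpha> (Phi q))"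
    unfolding TT_def by (subst prod.reindex[OF Phi_inj]) (simp only: comp_def)
  also have "\<dots> = (\<Prod>q\<in>Pidx. complex_of_real (t powr vv x q) ^ Poly_Mapping.lookup \<alpha> (Phi q) * hh x q t ^ Poly_Mapping.lookup \<alpha> (Phi q))"
    by (rule prod.cong[OF refl]) (simp only: yy_Phi[OF _ t] power_mult_distrib)
  also have "\<dots> = (\<Prod>q\<in>Pidx. complex_of_real (t powr (real (Poly_Mapping.lookup \<alpha> (Phi q)) * vv x q))) *
                  (\<Prod>q\<in>Pidx. hh x q t ^ Poly_Mapping.lookup \<alpha> (Phi q))"
    by (simp only: prod.distrib pow_powr_complex[OF t])
  also have "(\<Prod>q\<in>Pidx. complex_of_real (t powr (real (Poly_Mapping.lookup \<alpha> (Phi q)) * vv x q))) = complex_of_real (t powr EE x \<alpha>)"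
    unfolding EE_def by (rule prod_powr_complex[OF t])
  finally show "Poly_Mapping.lookup p \<alpha> * (\<Prod>v\<in>Poly_Mapping.keys \<alpha>. yy x t v ^ Poly_Mapping.lookup \<alpha> v) =
      Poly_Mapping.lookup p \<alpha> * complex_of_real (t powr EE x \<alpha>) * (\<Prod>q\<in>Pidx. hh x q t ^ Poly_Mapping.lookup \<alpha> (Phi q))"
    by (simp add: mult.assoc)
qed

lemma indep: "alg_indep_on (secant_param_image n d r) TT"
  unfolding alg_indep_on_def
proof (intro allI impI)
  fix p :: "nat set cpoly"
  assume vars: "poly_vars p \<subseteq> TT" and van: "\<forall>y\<in>secant_param_image n d r. poly_eval p y = 0"
  show "p = 0"
  proof (rule ccontr)
    assume p0: "p \<noteq> 0"
    have ka: "Poly_Mapping.keys \<alpha> \<subseteq> TT" if "\<alpha> \<in> Poly_Mapping.keys p" for \<alpha>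
      using vars that by (auto simp: poly_vars_def)
    define Ip where "Ip = {z \<in> Poly_Mapping.keys p \<times> Poly_Mapping.keys p. fst z \<noteq> snd z}"
    define Bad where "Bad = (\<Union>z\<in>Ip. {x. poly (qp (fst z) (snd z)) x = 0})"
    have fBad: "finite Bad"
      unfolding Bad_def
    proof (rule finite_UN_I)
      show "finite Ip" unfolding Ip_def by simp
      fix z assume "z \<in> Ip"
      then have z: "fst z \<in> Poly_Mapping.keys p" "snd z \<in> Poly_Mapping.keys p" "fst z \<noteq> snd z"
        by (auto simp: Ip_def)
      have "qp (fst z) (snd z) \<noteq> 0" by (rule qp_nonzero[OF ka[OF z(1)] ka[OF z(2)] z(3)])
      then show "finite {x. poly (qp (fst z) (snd z)) x = 0}" by (rule poly_roots_finite)
    qed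
    have "infinite ({0<..<1::real} - Bad)" using fBad by (simp add: Diff_infinite_finite)
    then obtain x where x: "x \<in> {0<..<1::real}" "x \<notin> Bad" using infinite_imp_nonempty by blast
    have x0: "0 < x" and x1: "x < 1" using x(1) by auto
    have injE: "inj_on (EE x) (Poly_Mapping.keys p)"
    proof (rule inj_onI)
      fix \<alpha> \<alpha>' assume a: "\<alpha> \<in> Poly_Mapping.keys p" "\<alpha>' \<in> Poly_Mapping.keys p" "EE x \<alpha> = EE x \<alpha>'"
      show "\<alpha> = \<alpha>'"
      proof (rule ccontr)
        assume ne: "\<alpha> \<noteq> \<alpha>'"
        have "(\<alpha>, \<alpha>') \<in> Ip" using a ne by (simp add: Ip_def)
        moreover have "poly (qp \<alpha> \<alpha>') x = 0" using a(3) by (simp add: poly_qp)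
        ultimately have "x \<in> Bad" unfolding Bad_def by force
        with x(2) show False by simp
      qed
    qed
    have Hlim: "((\<lambda>t. \<Prod>q\<in>Pidx. hh x q t ^ Poly_Mapping.lookup \<alpha> (Phi q)) \<longlongrightarrow> 1) at_top" for \<alpha>
    proof -
      have "((\<lambda>t. \<Prod>q\<in>Pidx. hh x q t ^ Poly_Mapping.lookup \<alpha> (Phi q)) \<longlongrightarrow> (\<Prod>q\<in>Pidx. 1 ^ Poly_Mapping.lookup \<alpha> (Phi q))) at_top"
        by (rule tendsto_prod, rule tendsto_power, rule hh_lim[OF _ x0 x1])
      then show ?thesis by simp
    qed
    have "Poly_Mapping.keys p \<noteq> {}" using p0 by simp
    have "\<exists>t>0. (\<Sum>\<alpha>\<in>Poly_Mapping.keys p. Poly_Mapping.lookup p \<alpha> * complex_of_real (t powr EE x \<alpha>) *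
           (\<lambda>\<alpha> t. \<Prod>q\<in>Pidx. hh x q t ^ Poly_Mapping.lookup \<alpha> (Phi q)) \<alpha> t) \<noteq> 0"
    proof (rule dominance)
      show "finite (Poly_Mapping.keys p)" by simp
      show "Poly_Mapping.keys p \<noteq> {}" by fact
      show "\<And>\<alpha>. \<alpha> \<in> Poly_Mapping.keys p \<Longrightarrow> Poly_Mapping.lookup p \<alpha> \<noteq> 0" by (simp add: in_keys_iff)
      show "inj_on (EE x) (Poly_Mapping.keys p)" by (rule injE)
      show "\<And>\<alpha>. \<alpha> \<in> Poly_Mapping.keys p \<Longrightarrow> ((\<lambda>\<alpha> t. \<Prod>q\<in>Pidx. hh x q t ^ Poly_Mapping.lookup \<alpha> (Phi q)) \<alpha> \<longlongrightarrow> 1) at_top"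
        using Hlim by simp
    qed
    then obtain t where t: "t > 0" "(\<Sum>\<alpha>\<in>Poly_Mapping.keys p. Poly_Mapping.lookup p \<alpha> * complex_of_real (t powr EE x \<alpha>) *
           (\<Prod>q\<in>Pidx. hh x q t ^ Poly_Mapping.lookup \<alpha> (Phi q))) \<noteq> 0"
      by auto
    have "poly_eval p (yy x t) \<noteq> 0" using eval_yy[OF vars t(1)] t(2) by simp
    moreover have "poly_eval p (yy x t) = 0" using van yy_in by blast
    ultimately show False by simp
  qed
qed

end



lemma summand_ppol:
  assumes j: "j < r" and S: "S \<subseteq> {..<n}"
  shows "(\<lambda>m::nat \<times> nat \<Rightarrow> complex. \<Prod>k\<in>S. m (j, k)) \<in> ppol ({..<r} \<times> {..<n}) 1"
proof -
  define P where "P = {..<r} \<times> {..<n}"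
  define \<beta> where "\<beta> = (\<lambda>q::nat \<times> nat. if q \<in> {j} \<times> S then 1 else (0::nat))"
  have sub: "{j} \<times> S \<subseteq> P" using j S by (auto simp: P_def)
  have fS: "finite S" by (rule finite_subset[OF S]) simp
  have bm: "\<beta> \<in> pmon P 1" using sub by (auto simp: pmon_def \<beta>_def)
  have "pmono P \<beta> m = (\<Prod>k\<in>S. m (j, k))" for m
  proof -
    have "pmono P \<beta> m = (\<Prod>q\<in>P. if q \<in> {j} \<times> S then m q else 1)"
      unfolding pmono_def \<beta>_def by (rule prod.cong[OF refl]) simp
    also have "\<dots> = (\<Prod>q\<in>{q\<in>P. q \<in> {j} \<times> S}. m q)"
      by (rule prod.inter_filter[symmetric]) (simp add: P_def)
    also have "{q\<in>P. q \<in> {j} \<times> S} = {j} \<times> S" using sub by auto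
    also have "{j} \<times> S = (\<lambda>k. (j, k)) ` S" by auto
    also have "(\<Prod>q\<in>(\<lambda>k. (j, k)) ` S. m q) = (\<Prod>k\<in>S. m (j, k))"
      by (subst prod.reindex) (auto simp: inj_on_def)
    finally show ?thesis .
  qed
  then have "pmono P \<beta> = (\<lambda>m. \<Prod>k\<in>S. m (j, k))" by (simp add: fun_eq_iff)
  with pmono_in_ppol[OF _ bm] show ?thesis by (simp add: P_def)
qed

lemma upper_bound:
  fixes n d r :: nat
  assumes Ssub: "S \<subseteq> hyp_coords n d" and ind: "alg_indep_on (secant_param_image n d r) S"
  shows "card S \<le> n * r"
proof (rule ccontr)
  assume "\<not> card S \<le> n * r"
  then have "n * r + 1 \<le> card S" by simp
  then obtain T where T: "T \<subseteq> S" "card T = n * r + 1" "finite T" by (rule obtain_subset_with_card_n)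
  define P where "P = {..<r} \<times> {..<n}"
  define f where "f = (\<lambda>(S'::nat set) (m::nat \<times> nat \<Rightarrow> complex). \<Sum>j<r. \<Prod>k\<in>S'. m (j, k))"
  have cP: "card P = n * r" by (simp add: P_def card_cartesian_product)
  have fin: "\<And>S'. S' \<in> T \<Longrightarrow> f S' \<in> ppol P 1"
  proof -
    fix S' assume "S' \<in> T"
    then have "S' \<subseteq> {..<n}" using T(1) Ssub by (auto simp: hyp_coords_def)
    then show "f S' \<in> ppol P 1"
      unfolding f_def P_def by (intro ppol_sum summand_ppol) auto
  qed
  have fP: "finite P" by (simp add: P_def)
  have cT: "card T = card P + 1" using T(2) cP by simp
  have "\<exists>p::nat set cpoly. p \<noteq> 0 \<and> poly_vars p \<subseteq> T \<and> (\<forall>\<mu>. poly_eval p (\<lambda>S. f S \<mu>) = 0)"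
    by (rule dependent[where f = f, OF fP T(3) cT fin])
  then obtain p :: "nat set cpoly" where p: "p \<noteq> 0" "poly_vars p \<subseteq> T" "\<And>m. poly_eval p (\<lambda>S'. f S' m) = 0"
    by blast
  have "\<forall>y\<in>secant_param_image n d r. poly_eval p y = 0"
  proof
    fix y assume "y \<in> secant_param_image n d r"
    then obtain \<mu> where y: "y = (\<lambda>S'. if S' \<in> hyp_coords n d then (\<Sum>j<r. \<Prod>k\<in>S'. \<mu> j k) else 0)"
      by (auto simp: secant_param_image_def)
    have "poly_eval p y = poly_eval p (\<lambda>S'. f S' (\<lambda>(j, k). \<mu> j k))"
    proof (rule poly_eval_cong[OF p(2)])
      fix v assume "v \<in> T"
      then have "v \<in> hyp_coords n d" using T(1) Ssub by auto
      then show "y v = f v (\<lambda>(j, k). \<mu> j k)" by (simp add: y f_def)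
    qed
    then show "poly_eval p y = 0" using p(3) by simp
  qed
  moreover have "poly_vars p \<subseteq> S" using p(2) T(1) by auto
  ultimately have "p = 0" using ind by (auto simp: alg_indep_on_def)
  with p(1) show False by simp
qed

theorem theorem5p8:
  fixes n d r :: nat
  assumes "1 \<le> d" and "d < n" and "1 \<le> r"
    and "(1 + d * (n - d) + (d choose 2) * ((n - d) choose 2)) * r \<le> n choose d"
  shows "secant_dim n d r = min (n * r - 1) ((n choose d) - 1)
         \<and> secant_dim n d r = n * r - 1"
proof -
  from packing[OF assms(1,2,4)] obtain c where
    c: "\<forall>j<r. c j \<in> hyp_coords n d" "\<forall>i<r. \<forall>j<r. i \<noteq> j \<longrightarrow> card (c i \<inter> c j) + 3 \<le> d" by blast
  interpret lowctx n d r c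
    by unfold_locales (use assms(1,2) c in auto)
  define Ds where "Ds = {card S | S. S \<subseteq> hyp_coords n d \<and> alg_indep_on (secant_param_image n d r) S}"
  have "Ds \<subseteq> {..n * r}" using upper_bound by (auto simp: Ds_def)
  then have fD: "finite Ds" by (rule finite_subset) simp
  have inD: "n * r \<in> Ds" unfolding Ds_def
    by (intro CollectI exI[of _ TT]) (simp add: TT_hyp indep card_TT)
  have "Max Ds = n * r"
    by (rule Max_eqI[OF fD]) (use upper_bound inD in \<open>auto simp: Ds_def\<close>)
  then have sd: "secant_dim n d r = n * r - 1"
    by (simp add: secant_dim_def affine_dim_def Ds_def)
  have "n \<le> 1 + d * (n - d)"
  proof -
    obtain m where m: "n = d + m" "m \<ge> 1" using assms(2) by (metis le_add_diff_inverse less_imp_le_nat zero_less_diff Suc_leI One_nat_def)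
    obtain d' where d': "d = d' + 1" using assms(1) by (metis le_add_diff_inverse2)
    obtain m' where m': "m = m' + 1" using m(2) by (metis le_add_diff_inverse2)
    show ?thesis using m(1) d' m' by (simp add: algebra_simps)
  qed
  then have "n * r \<le> (1 + d * (n - d) + (d choose 2) * ((n - d) choose 2)) * r"
    by (intro mult_right_mono) auto
  then have "n * r \<le> n choose d" using assms(4) by linarith
  then have "min (n * r - 1) ((n choose d) - 1) = n * r - 1" by simp
  with sd show ?thesis by simp
qed


end
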